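(* Let $F$ be a Ferrers diagram and $G=G(F)$. For $c,c'\in\mathsf{Rec}^{\mathsf{min}}(G)$ we have $\mathsf{CanonTop}(c)=\mathsf{CanonTop}(c')$ if and only if $c=c'$.
   Context: Ferrers diagrams and graphs: a Ferrers diagram $F$ (English convention) of semiperimeter $n+1$ has rows and columns labeled by $0,\ldots,n$: the $n+1$ unit steps of its south-east boundary path, traversed from top-right to bottom-left, are labeled $0,1,\ldots,n$; a vertical step labels the row it bounds, a horizontal step the column it bounds (top row labeled $0$). $\mathsf{rows}(F)$, $\mathsf{cols}(F)$ are the row/column label sets; they partition $\{0,\ldots,n\}$, and $F$ has a cell in row $i$, column $j$ iff $i<j$. $G(F)$ has vertex set $\{0,\ldots,n\}$ with an edge between $i\in\mathsf{rows}(F)$ and $j\in\mathsf{cols}(F)$ iff $i<j$. Sandpile model with sink $0$: configurations $c\in\mathbb{N}^n$; non-sink $v$ unstable if $c_v\ge \deg(v)$; toppling $v$ sends one grain to each neighbour (grains sent to $0$ disappear); toppling the sink adds a grain to each of its neighbours. Recurrent configurations: stable configurations obtainable from the maximal stable configuration ($c_v=\deg(v)-1$) by adding grains and stabilizing; $\mathsf{Rec}(G)$ is their set and $\mathsf{Rec}^{\mathsf{min}}(G)$ the set of recurrent configurations with minimal total number of grains. Canonical toppling: for $c\in\mathsf{Rec}(G(F))$, starting from $c$ topple the sink ($U^{(0)}_c=\{0\}$), then alternately topple simultaneously all unstable vertices in $\mathsf{cols}(F)$ ($V^{(1)}_c$), all unstable vertices in $\mathsf{rows}(F)$ ($U^{(1)}_c$),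 all unstable in $\mathsf{cols}(F)$ ($V^{(2)}_c$), etc.; each vertex topples exactly once, and $\mathsf{CanonTop}(c)=(U^{(0)}_c,V^{(1)}_c,U^{(1)}_c,\ldots)$ is the resulting ordered set partition of $\{0,\ldots,n\}$. *)

theory Defs
  imports Main
begin

text \<open>A Ferrers diagram is given by its list of row lengths (top to bottom),
  a nonempty weakly decreasing list of positive integers.\<close>
definition ferrers :: "nat list \<Rightarrow> bool" where
  "ferrers lam \<longleftrightarrow> lam \<noteq> [] \<and> sorted (rev lam) \<and> (\<forall>x\<in>set lam. 0 < x)"

text \<open>Semiperimeter is length + first row length = N + 1; labels are 0..N.\<close>
definition NF :: "nat list \<Rightarrow> nat" where
  "NF lam = length lam + hd lam - 1"

text \<open>Row i (0-indexed from the top) is bounded by the vertical step preceded by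
  i vertical steps and (hd lam - lam!i) horizontal steps of the boundary path.\<close>
definition rowsF :: "nat list \<Rightarrow> nat set" where
  "rowsF lam = {i + (hd lam - lam ! i) | i. i < length lam}"

definition colsF :: "nat list \<Rightarrow> nat set" where
  "colsF lam = {0..NF lam} - rowsF lam"

definition adjF :: "nat list \<Rightarrow> nat \<Rightarrow> nat \<Rightarrow> bool" where
  "adjF lam u v \<longleftrightarrow>
     (u \<in> rowsF lam \<and> v \<in> colsF lam \<and> u < v) \<or> (v \<in> rowsF lam \<and> u \<in> colsF lam \<and> v < u)"

definition degF :: "nat list \<Rightarrow> nat \<Rightarrow> nat" where
  "degF lam v = card {u \<in> {0..NF lam}. adjF lam u v}"

text \<open>Configurations are functions on the non-sink vertices 1..N, encoded as
  functions nat => nat vanishing outside {1..N}.\<close>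
definition is_config :: "nat list \<Rightarrow> (nat \<Rightarrow> nat) \<Rightarrow> bool" where
  "is_config lam c \<longleftrightarrow> (\<forall>v. v \<notin> {1..NF lam} \<longrightarrow> c v = 0)"

definition stable :: "nat list \<Rightarrow> (nat \<Rightarrow> nat) \<Rightarrow> bool" where
  "stable lam c \<longleftrightarrow> (\<forall>v\<in>{1..NF lam}. c v < degF lam v)"

definition unstable_at :: "nat list \<Rightarrow> (nat \<Rightarrow> nat) \<Rightarrow> nat \<Rightarrow> bool" where
  "unstable_at lam c v \<longleftrightarrow> v \<in> {1..NF lam} \<and> degF lam v \<le> c v"

text \<open>Simultaneous toppling of a set S of vertices (each topples once).
  Grains sent to the sink disappear.  If S contains the sink, this is the sink toppling.\<close>
definition topple_set :: "nat list \<Rightarrow> nat set \<Rightarrow> (nat \<Rightarrow> nat) \<Rightarrow> (nat \<Rightarrow> nat)" where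
  "topple_set lam S c = (\<lambda>u. if u \<in> {1..NF lam}
      then (c u + card {v \<in> S. adjF lam v u}) - (if u \<in> S then degF lam u else 0)
      else 0)"

definition legal_step :: "nat list \<Rightarrow> (nat \<Rightarrow> nat) \<Rightarrow> (nat \<Rightarrow> nat) \<Rightarrow> bool" where
  "legal_step lam c d \<longleftrightarrow> (\<exists>v. unstable_at lam c v \<and> d = topple_set lam {v} c)"

definition cmax :: "nat list \<Rightarrow> nat \<Rightarrow> nat" where
  "cmax lam = (\<lambda>v. if v \<in> {1..NF lam} then degF lam v - 1 else 0)"

definition Rec :: "nat list \<Rightarrow> (nat \<Rightarrow> nat) set" where
  "Rec lam = {c. is_config lam c \<and> stable lam c \<and>
      (\<exists>a. is_config lam a \<and> (legal_step lam)\<^sup>*\<^sup>* (\<lambda>v. cmax lam v + a v) c)}"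

definition Rec_min :: "nat list \<Rightarrow> (nat \<Rightarrow> nat) set" where
  "Rec_min lam = {c \<in> Rec lam. \<forall>d \<in> Rec lam. sum c {1..NF lam} \<le> sum d {1..NF lam}}"

fun canon_stage :: "nat list \<Rightarrow> (nat \<Rightarrow> nat) \<Rightarrow> nat \<Rightarrow> nat set \<times> (nat \<Rightarrow> nat)" where
  "canon_stage lam c 0 = ({0}, topple_set lam {0} c)"
| "canon_stage lam c (Suc k) =
     (let d = snd (canon_stage lam c k);
          S = {v. unstable_at lam d v \<and> v \<in> (if odd (Suc k) then colsF lam else rowsF lam)}
      in (S, topple_set lam S d))"

text \<open>The sequence of stages (U0, V1, U1, V2, ...); once a stage is empty, all later
  stages are empty, so the nonempty stages form the ordered set partition.\<close>
definition CanonTop :: "nat list \<Rightarrow> (nat \<Rightarrow> nat) \<Rightarrow> nat \<Rightarrow> nat set" where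
  "CanonTop lam c = (\<lambda>k. fst (canon_stage lam c k))"

end

theory Submission
  imports Defs
begin

definition nb :: "nat list \<Rightarrow> nat set \<Rightarrow> nat \<Rightarrow> nat" where
  "nb lam T v = card {u \<in> T. adjF lam u v}"

fun Yseq :: "nat list \<Rightarrow> (nat \<Rightarrow> nat set) \<Rightarrow> (nat \<Rightarrow> nat) \<Rightarrow> nat \<Rightarrow> (nat \<Rightarrow> nat)" where
  "Yseq lam S g 0 = topple_set lam {0} g"
| "Yseq lam S g (Suc k) = topple_set lam (S (Suc k)) (Yseq lam S g k)"

definition Tset :: "(nat \<Rightarrow> nat set) \<Rightarrow> nat \<Rightarrow> nat set" where
  "Tset S k = (\<Union>i\<le>k. S i)"

lemma Tset_0: "Tset S 0 = S 0" unfolding Tset_def by simp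

lemma Tset_Suc: "Tset S (Suc k) = Tset S k \<union> S (Suc k)"
  unfolding Tset_def by (simp add: atMost_Suc Un_commute)

lemma Tset_mono: "i \<le> k \<Longrightarrow> S i \<subseteq> Tset S k"
  unfolding Tset_def by auto

definition kv :: "(nat \<Rightarrow> nat set) \<Rightarrow> nat \<Rightarrow> nat" where
  "kv S v = (LEAST j. v \<in> S (Suc j))"

definition fmin :: "nat list \<Rightarrow> (nat \<Rightarrow> nat set) \<Rightarrow> nat \<Rightarrow> nat" where
  "fmin lam S v = (if v \<in> {1..NF lam} then degF lam v - nb lam (Tset S (kv S v)) v else 0)"

locale fer =
  fixes lam :: "nat list"
  assumes fer: "ferrers lam"
begin

abbreviation "N \<equiv> NF lam"

lemma lam_ne: "lam \<noteq> []" and lam_pos: "\<And>x. x \<in> set lam \<Longrightarrow> 0 < x"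
  using fer unfolding ferrers_def by auto

lemma N_pos: "1 \<le> N"
  using lam_ne lam_pos[of "hd lam"] unfolding NF_def by (cases lam) auto

lemma rows_lt: "r \<in> rowsF lam \<Longrightarrow> r < N"
proof -
  assume "r \<in> rowsF lam"
  then obtain i where i: "i < length lam" "r = i + (hd lam - lam ! i)" unfolding rowsF_def by auto
  have "0 < lam ! i" using lam_pos i(1) by auto
  moreover have "0 < hd lam" using lam_pos lam_ne by auto
  ultimately show ?thesis using i unfolding NF_def by linarith
qed

lemma zero_row: "0 \<in> rowsF lam"
  unfolding rowsF_def using lam_ne by (cases lam) auto

lemma N_col: "N \<in> colsF lam"
  unfolding colsF_def using rows_lt by auto

lemma rows_cols_disj: "v \<in> rowsF lam \<Longrightarrow> v \<notin> colsF lam"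
  unfolding colsF_def by auto

lemma rows_or_cols: "v \<le> N \<Longrightarrow> v \<in> rowsF lam \<or> v \<in> colsF lam"
  unfolding colsF_def by auto

lemma cols_le: "v \<in> colsF lam \<Longrightarrow> v \<le> N"
  unfolding colsF_def by auto

lemma cols_pos: "v \<in> colsF lam \<Longrightarrow> 0 < v"
  using zero_row rows_cols_disj by (cases v) auto

lemma adj_sym: "adjF lam u v = adjF lam v u"
  unfolding adjF_def by auto

lemma adj_le: "adjF lam u v \<Longrightarrow> u \<le> N \<and> v \<le> N"
  unfolding adjF_def using rows_lt cols_le by fastforce

lemma adj_irrefl: "\<not> adjF lam u u"
  unfolding adjF_def by auto

lemma adj_rows: "u \<in> rowsF lam \<Longrightarrow> v \<in> rowsF lam \<Longrightarrow> \<not> adjF lam u v"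
  unfolding adjF_def using rows_cols_disj by auto

lemma adj_cols: "u \<in> colsF lam \<Longrightarrow> v \<in> colsF lam \<Longrightarrow> \<not> adjF lam u v"
  unfolding adjF_def using rows_cols_disj by auto

lemma adj_0_col: "v \<in> colsF lam \<Longrightarrow> adjF lam 0 v"
  unfolding adjF_def using zero_row cols_pos by auto

lemma adj_row_N: "v \<in> rowsF lam \<Longrightarrow> adjF lam v N"
  unfolding adjF_def using N_col rows_lt by auto

lemma nb_finite: "finite {u \<in> T. adjF lam u v}"
  by (rule finite_subset[of _ "{0..N}"]) (auto dest: adj_le)

lemma deg_nb: "degF lam v = nb lam {0..N} v"
  unfolding degF_def nb_def by simp

lemma nb_le_deg: "nb lam T v \<le> degF lam v"
  unfolding deg_nb nb_def
  by (rule card_mono) (auto dest: adj_le intro: nb_finite)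

lemma nb_un: "A \<inter> B = {} \<Longrightarrow> nb lam (A \<union> B) v = nb lam A v + nb lam B v"
proof -
  assume "A \<inter> B = {}"
  then have "{u \<in> A \<union> B. adjF lam u v} = {u \<in> A. adjF lam u v} \<union> {u \<in> B. adjF lam u v}"
     "{u \<in> A. adjF lam u v} \<inter> {u \<in> B. adjF lam u v} = {}" by auto
  then show ?thesis unfolding nb_def using nb_finite by (simp add: card_Un_disjoint)
qed

lemma nb_empty: "nb lam {} v = 0" unfolding nb_def by simp

lemma nb_single: "nb lam {w} v = (if adjF lam w v then 1 else 0)"
proof -
  have "{u \<in> {w}. adjF lam u v} = (if adjF lam w v then {w} else {})" by auto
  then show ?thesis unfolding nb_def by simp
qed

lemma nb_indep: "v \<in> S \<Longrightarrow> (\<forall>u\<in>S. \<forall>w\<in>S. \<not> adjF lam u w) \<Longrightarrow> nb lam S v = 0"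
proof -
  assume "v \<in> S" "\<forall>u\<in>S. \<forall>w\<in>S. \<not> adjF lam u w"
  then have "{u \<in> S. adjF lam u v} = {}" by auto
  then show ?thesis unfolding nb_def by (simp only: card.empty)
qed

lemma deg_pos: "v \<in> {1..N} \<Longrightarrow> 1 \<le> degF lam v"
proof -
  assume v: "v \<in> {1..N}"
  show ?thesis
  proof (cases "v \<in> colsF lam")
    case True
    then have "0 \<in> {u \<in> {0..N}. adjF lam u v}" using adj_0_col by auto
    then show ?thesis unfolding degF_def using card_gt_0_iff[of "{u \<in> {0..N}. adjF lam u v}"] nb_finite[of "{0..N}" v]
      by (metis (no_types, lifting) Suc_leI One_nat_def empty_iff)
  next
    case False
    then have "v \<in> rowsF lam" using v rows_or_cols by auto
    then have "N \<in> {u \<in> {0..N}. adjF lam u v}" using adj_row_N adj_sym by auto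
    then show ?thesis unfolding degF_def using card_gt_0_iff[of "{u \<in> {0..N}. adjF lam u v}"] nb_finite[of "{0..N}" v]
      by (metis (no_types, lifting) Suc_leI One_nat_def empty_iff)
  qed
qed

lemma deg_le: "degF lam v \<le> N + 1"
proof -
  have "degF lam v \<le> card {0..N}" unfolding degF_def by (rule card_mono) auto
  then show ?thesis by simp
qed


definition indep :: "nat set \<Rightarrow> bool" where
  "indep S \<longleftrightarrow> (\<forall>u\<in>S. \<forall>w\<in>S. \<not> adjF lam u w)"

lemma topple_nb: "topple_set lam S c = (\<lambda>u. if u \<in> {1..N}
      then (c u + nb lam S u) - (if u \<in> S then degF lam u else 0) else 0)"
  unfolding topple_set_def nb_def by simp

lemma topple_empty: "is_config lam x \<Longrightarrow> topple_set lam {} x = x"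
  unfolding topple_nb is_config_def nb_empty by auto

lemma topple_config: "is_config lam (topple_set lam S x)"
  unfolding topple_nb is_config_def by auto

lemma topple_insert:
  assumes "w \<notin> S" "indep (insert w S)" "\<forall>v\<in>insert w S. degF lam v \<le> x v"
  shows "topple_set lam (insert w S) x = topple_set lam {w} (topple_set lam S x)"
proof
  fix u
  have ins: "insert w S = {w} \<union> S" by auto
  have "nb lam ({w} \<union> S) u = nb lam {w} u + nb lam S u"
    using assms(1) by (intro nb_un) auto
  then have nbi: "nb lam (insert w S) u = nb lam {w} u + nb lam S u"
    by (simp only: ins[symmetric])
  show "topple_set lam (insert w S) x u = topple_set lam {w} (topple_set lam S x) u"
  proof (cases "u \<in> {1..N}")
    case False then show ?thesis by (simp only: topple_nb if_not_P[OF False] if_False)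
  next
    case u: True
    show ?thesis
    proof (cases "u \<in> insert w S")
      case True
      then have z1: "nb lam (insert w S) u = 0"
        using assms(2) unfolding indep_def by (intro nb_indep) (assumption, assumption)
      have z2: "nb lam {w} u = 0" "nb lam S u = 0" using z1 nbi by auto
      have dx: "degF lam u \<le> x u" using assms(3) True by auto
      have uu: "(u \<in> {1..N}) = True" using u by simp
      show ?thesis
      proof (cases "u = w")
        case True
        then have "u \<notin> S" using assms(1) by auto
        then show ?thesis using True z1 z2 by (simp only: topple_nb uu if_True) simp
      next
        case False
        then have "u \<in> S" using \<open>u \<in> insert w S\<close> by auto
        then show ?thesis using False z1 z2 by (simp only: topple_nb uu if_True) simp
      qed
    next
      case False
      have uu: "(u \<in> {1..N}) = True" using u by simp
      show ?thesis using False nbi by (simp only: topple_nb uu if_True) simp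
    qed
  qed
qed

lemma legal_indep:
  assumes "finite S" "S \<subseteq> {1..N}" "indep S" "\<forall>v\<in>S. degF lam v \<le> x v" "is_config lam x"
  shows "(legal_step lam)\<^sup>*\<^sup>* x (topple_set lam S x)"
  using assms
proof (induction S rule: finite_induct)
  case empty
  then show ?case using topple_empty by simp
next
  case (insert w S)
  have iS: "indep S" using insert.prems(2) unfolding indep_def by auto
  have IH: "(legal_step lam)\<^sup>*\<^sup>* x (topple_set lam S x)" using insert iS by auto
  have nbw: "nb lam S w = 0"
  proof -
    have "{u \<in> S. adjF lam u w} = {}" using insert.prems(2) unfolding indep_def by auto
    then show ?thesis unfolding nb_def by (simp only: card.empty)
  qed
  have w: "w \<in> {1..N}" using insert.prems(1) by auto
  have "topple_set lam S x w = x w" using w nbw insert.hyps(2) unfolding topple_nb by simp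
  then have "unstable_at lam (topple_set lam S x) w" unfolding unstable_at_def using w insert.prems(3) by auto
  then have "legal_step lam (topple_set lam S x) (topple_set lam {w} (topple_set lam S x))"
    unfolding legal_step_def by auto
  then show ?case using IH topple_insert[OF insert.hyps(2) insert.prems(2) insert.prems(3)] by simp
qed

definition fsc :: "(nat \<Rightarrow> nat) \<Rightarrow> nat set \<Rightarrow> bool" where
  "fsc x W \<longleftrightarrow> W \<noteq> {} \<and> W \<subseteq> {1..N} \<and> (\<forall>v\<in>W. x v < nb lam W v)"

lemma fsc_step:
  assumes "legal_step lam x y" "fsc y W"
  shows "\<exists>W'. fsc x W'"
proof -
  obtain u where u: "unstable_at lam x u" "y = topple_set lam {u} x" using assms(1) unfolding legal_step_def by auto
  have W: "W \<noteq> {}" "W \<subseteq> {1..N}" "\<forall>v\<in>W. y v < nb lam W v" using assms(2) unfolding fsc_def by auto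
  have yv: "y v = x v + nb lam {u} v" if "v \<in> {1..N}" "v \<noteq> u" for v
  proof -
    have "(v \<in> {1..N}) = True" "(v \<in> {u}) = False" using that by auto
    then show ?thesis unfolding u(2) topple_nb by (simp only: if_True if_False diff_zero)
  qed
  show ?thesis
  proof (cases "u \<in> W")
    case False
    have "\<forall>v\<in>W. x v < nb lam W v"
    proof
      fix v assume v: "v \<in> W"
      then have "v \<in> {1..N}" "v \<noteq> u" using W(2) False by auto
      then have "y v = x v + nb lam {u} v" by (rule yv)
      moreover have "y v < nb lam W v" using W(3) v by blast
      ultimately show "x v < nb lam W v" by linarith
    qed
    then show ?thesis using W unfolding fsc_def by blast
  next
    case True
    have ne: "W - {u} \<noteq> {}"
    proof
      assume "W - {u} = {}"
      then have "W = {u}" using True by auto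
      then have "y u < nb lam {u} u" using W(3) by auto
      then show False unfolding nb_single using adj_irrefl by simp
    qed
    have "\<forall>v\<in>W - {u}. x v < nb lam (W - {u}) v"
    proof
      fix v assume v: "v \<in> W - {u}"
      then have v1: "v \<in> {1..N}" "v \<noteq> u" using W(2) by auto
      have Wu: "{u} \<union> (W - {u}) = W" using True by auto
      have "nb lam ({u} \<union> (W - {u})) v = nb lam {u} v + nb lam (W - {u}) v" by (rule nb_un) auto
      then have e: "nb lam W v = nb lam {u} v + nb lam (W - {u}) v" by (simp only: Wu)
      have "y v = x v + nb lam {u} v" using v1 by (rule yv)
      moreover have "y v < nb lam W v" using W(3) v by blast
      ultimately show "x v < nb lam (W - {u}) v" using e by linarith
    qed
    then have "fsc x (W - {u})" unfolding fsc_def using ne W(2) by blast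
    then show ?thesis by blast
  qed
qed

lemma fsc_steps:
  assumes "(legal_step lam)\<^sup>*\<^sup>* x y" "fsc y W"
  shows "\<exists>W'. fsc x W'"
  using assms
proof (induction arbitrary: W rule: converse_rtranclp_induct)
  case base then show ?case by blast
next
  case (step x z)
  then obtain W' where "fsc z W'" by blast
  then show ?case using fsc_step[OF step(1)] by blast
qed

lemma no_fsc_max:
  assumes "\<forall>v. cmax lam v \<le> z v"
  shows "\<not> fsc z W"
proof
  assume f: "fsc z W"
  have W: "W \<noteq> {}" "W \<subseteq> {1..N}" "\<forall>v\<in>W. z v < nb lam W v" using f unfolding fsc_def by auto
  have full: "\<And>v w. v \<in> W \<Longrightarrow> w \<le> N \<Longrightarrow> adjF lam w v \<Longrightarrow> w \<in> W"
  proof -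
    fix v w assume v: "v \<in> W" and w: "w \<le> N" "adjF lam w v"
    have "cmax lam v = degF lam v - 1" using v W(2) unfolding cmax_def by auto
    then have "degF lam v - 1 < nb lam W v" using assms[rule_format, of v] W(3) v by auto
    then have eq: "nb lam W v = nb lam {0..N} v" using nb_le_deg[of W v] unfolding deg_nb by linarith
    have sub: "{u \<in> W. adjF lam u v} \<subseteq> {u \<in> {0..N}. adjF lam u v}" using W(2) by auto
    have "{u \<in> W. adjF lam u v} = {u \<in> {0..N}. adjF lam u v}"
      using card_subset_eq[OF nb_finite sub] eq unfolding nb_def by auto
    then show "w \<in> W" using w by auto
  qed
  obtain v where v: "v \<in> W" using W(1) by auto
  have "N \<in> W"
  proof (cases "v \<in> colsF lam")
    case True
    then have "0 \<in> W" using full[OF v _ adj_0_col] by auto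
    then show ?thesis using W(2) by auto
  next
    case False
    then have "v \<in> rowsF lam" using rows_or_cols[of v] v W(2) by auto
    then show ?thesis using full[OF v _] adj_row_N adj_sym by auto
  qed
  then have "0 \<in> W" using full[OF _ _ adj_0_col[OF N_col]] by auto
  then show False using W(2) by auto
qed

lemma rec_no_fsc: "c \<in> Rec lam \<Longrightarrow> \<not> fsc c W"
proof
  assume c: "c \<in> Rec lam" and f: "fsc c W"
  then obtain a where a: "(legal_step lam)\<^sup>*\<^sup>* (\<lambda>v. cmax lam v + a v) c" unfolding Rec_def by auto
  then obtain W' where "fsc (\<lambda>v. cmax lam v + a v) W'" using fsc_steps f by blast
  then show False using no_fsc_max[of "\<lambda>v. cmax lam v + a v" W'] by auto
qed


definition goodS :: "(nat \<Rightarrow> nat set) \<Rightarrow> bool" where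
  "goodS S \<longleftrightarrow> S 0 = {0} \<and> (\<forall>j. S (Suc j) \<subseteq> {1..N} \<and> indep (S (Suc j)))"

lemma Yseq_config: "is_config lam (Yseq lam S g k)"
  by (cases k) (auto simp: topple_config)

lemma Tset_sub: "goodS S \<Longrightarrow> Tset S k \<subseteq> {0..N}"
proof (induction k)
  case 0 then show ?case unfolding goodS_def Tset_0 by auto
next
  case (Suc k)
  have "S (Suc k) \<subseteq> {1..N}" using Suc.prems unfolding goodS_def by blast
  moreover have "Tset S k \<subseteq> {0..N}" using Suc by blast
  ultimately show ?case unfolding Tset_Suc by auto
qed

lemma zero_T: "goodS S \<Longrightarrow> 0 \<in> Tset S k"
  using Tset_mono[of 0 k S] unfolding goodS_def by auto

lemma inv:
  assumes "goodS S"
    and "\<forall>j<k. S (Suc j) \<inter> Tset S j = {}"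
    and "\<forall>j<k. \<forall>v\<in>S (Suc j). degF lam v \<le> Yseq lam S g j v"
  shows "\<forall>v\<in>{1..N}. Yseq lam S g k v + (if v \<in> Tset S k then degF lam v else 0) = g v + nb lam (Tset S k) v"
  using assms(2,3)
proof (induction k)
  case 0
  show ?case
  proof
    fix v assume v: "v \<in> {1..N}"
    then have "v \<noteq> 0" by auto
    have S0: "S 0 = {0}" using assms(1) unfolding goodS_def by auto
    have "(v \<in> {1..N}) = True" "(v \<in> {0}) = False" using v by auto
    then have "Yseq lam S g 0 v = g v + nb lam {0} v" unfolding Yseq.simps topple_nb
      by (simp only: if_True if_False diff_zero)
    then show "Yseq lam S g 0 v + (if v \<in> Tset S 0 then degF lam v else 0) = g v + nb lam (Tset S 0) v"
      unfolding Tset_0 S0 using \<open>v \<noteq> 0\<close> by simp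
  qed
next
  case (Suc k)
  have IH: "\<forall>v\<in>{1..N}. Yseq lam S g k v + (if v \<in> Tset S k then degF lam v else 0) = g v + nb lam (Tset S k) v"
    using Suc by auto
  have disj: "S (Suc k) \<inter> Tset S k = {}" using Suc.prems(1) by auto
  have leg: "\<forall>v\<in>S (Suc k). degF lam v \<le> Yseq lam S g k v" using Suc.prems(2) by auto
  have ind: "indep (S (Suc k))" using assms(1) unfolding goodS_def by auto
  show ?case
  proof
    fix v assume v: "v \<in> {1..N}"
    have nbT: "nb lam (Tset S (Suc k)) v = nb lam (Tset S k) v + nb lam (S (Suc k)) v"
      unfolding Tset_Suc using disj by (intro nb_un) auto
    have vv: "(v \<in> {1..N}) = True" using v by simp
    have Y: "Yseq lam S g (Suc k) v = (Yseq lam S g k v + nb lam (S (Suc k)) v) - (if v \<in> S (Suc k) then degF lam v else 0)"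
      unfolding Yseq.simps topple_nb by (simp only: vv if_True)
    show "Yseq lam S g (Suc k) v + (if v \<in> Tset S (Suc k) then degF lam v else 0) = g v + nb lam (Tset S (Suc k)) v"
    proof (cases "v \<in> S (Suc k)")
      case True
      have z: "nb lam (S (Suc k)) v = 0" using ind True unfolding indep_def by (intro nb_indep) auto
      have nT: "v \<notin> Tset S k" using disj True by auto
      have d: "degF lam v \<le> Yseq lam S g k v" using leg True by auto
      have "Yseq lam S g k v + (if v \<in> Tset S k then degF lam v else 0) = g v + nb lam (Tset S k) v"
        using IH v by blast
      then have "Yseq lam S g k v = g v + nb lam (Tset S k) v" using nT by simp
      then show ?thesis using Y z d nbT True unfolding Tset_Suc by auto
    next
      case False
      have "Yseq lam S g k v + (if v \<in> Tset S k then degF lam v else 0) = g v + nb lam (Tset S k) v"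
        using IH v by blast
      then show ?thesis using Y nbT False unfolding Tset_Suc by auto
    qed
  qed
qed

lemma canon_Y: "snd (canon_stage lam c k) = Yseq lam (CanonTop lam c) c k"
proof (induction k)
  case 0 then show ?case by simp
next
  case (Suc k)
  then show ?case unfolding CanonTop_def by (simp add: Let_def)
qed

lemma canon_S: "CanonTop lam c (Suc k) = {v. unstable_at lam (Yseq lam (CanonTop lam c) c k) v \<and>
     v \<in> (if odd (Suc k) then colsF lam else rowsF lam)}"
proof -
  have "CanonTop lam c (Suc k) = {v. unstable_at lam (snd (canon_stage lam c k)) v \<and>
     v \<in> (if odd (Suc k) then colsF lam else rowsF lam)}"
    unfolding CanonTop_def by (simp add: Let_def)
  then show ?thesis unfolding canon_Y .
qed

lemma canon_good: "goodS (CanonTop lam c)"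
  unfolding goodS_def
proof (intro conjI allI)
  show "CanonTop lam c 0 = {0}" unfolding CanonTop_def by simp
  fix j
  show "CanonTop lam c (Suc j) \<subseteq> {1..N}" unfolding canon_S unstable_at_def by auto
  show "indep (CanonTop lam c (Suc j))" unfolding canon_S indep_def
    using adj_cols adj_rows by (auto split: if_splits)
qed


lemma rec_props: "c \<in> Rec lam \<Longrightarrow> is_config lam c \<and> stable lam c"
  unfolding Rec_def by auto

lemma canon_legal:
  "v \<in> CanonTop lam c (Suc j) \<Longrightarrow> degF lam v \<le> Yseq lam (CanonTop lam c) c j v"
  unfolding canon_S unstable_at_def by auto

lemma canon_disj:
  assumes "stable lam c"
  shows "CanonTop lam c (Suc k) \<inter> Tset (CanonTop lam c) k = {}"
proof (induction k rule: less_induct)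
  case (less k)
  let ?S = "CanonTop lam c"
  have I: "\<forall>v\<in>{1..N}. Yseq lam ?S c k v + (if v \<in> Tset ?S k then degF lam v else 0) = c v + nb lam (Tset ?S k) v"
    by (rule inv[OF canon_good]) (use less canon_legal in auto)
  show ?case
  proof (rule ccontr)
    assume "?S (Suc k) \<inter> Tset ?S k \<noteq> {}"
    then obtain v where v: "v \<in> ?S (Suc k)" "v \<in> Tset ?S k" by auto
    have v1: "v \<in> {1..N}" using v(1) canon_good unfolding goodS_def by blast
    have d: "degF lam v \<le> Yseq lam ?S c k v" using canon_legal v(1) by blast
    have e: "Yseq lam ?S c k v + degF lam v = c v + nb lam (Tset ?S k) v" using bspec[OF I v1] v(2) by simp
    have "c v < degF lam v" using assms v1 unfolding stable_def by blast
    moreover have "nb lam (Tset ?S k) v \<le> degF lam v" by (rule nb_le_deg)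
    ultimately show False using d e by linarith
  qed
qed

lemma canon_inv:
  assumes "stable lam c"
  shows "\<forall>v\<in>{1..N}. Yseq lam (CanonTop lam c) c k v + (if v \<in> Tset (CanonTop lam c) k then degF lam v else 0)
     = c v + nb lam (Tset (CanonTop lam c) k) v"
  by (rule inv[OF canon_good]) (use canon_disj[OF assms] canon_legal in auto)

lemma two_empty:
  assumes c: "c \<in> Rec lam"
    and e1: "CanonTop lam c (Suc k) = {}" and e2: "CanonTop lam c (Suc (Suc k)) = {}"
  shows "Tset (CanonTop lam c) k = {0..N}"
proof -
  let ?S = "CanonTop lam c"
  let ?T = "Tset ?S k"
  let ?W = "{1..N} - ?T"
  have st: "stable lam c" using rec_props[OF c] by auto
  have Y1: "Yseq lam ?S c (Suc k) = Yseq lam ?S c k"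
    using e1 topple_empty[OF Yseq_config] by simp
  have Tsub: "?T \<subseteq> {0..N}" using Tset_sub[OF canon_good] .
  have z: "0 \<in> ?T" using zero_T[OF canon_good] .
  have "\<forall>v\<in>?W. c v < nb lam ?W v"
  proof
    fix v assume v: "v \<in> ?W"
    then have v1: "v \<in> {1..N}" "v \<notin> ?T" by auto
    have lt: "Yseq lam ?S c k v < degF lam v"
    proof (cases "v \<in> (if odd (Suc k) then colsF lam else rowsF lam)")
      case True
      then have "\<not> unstable_at lam (Yseq lam ?S c k) v" using e1 unfolding canon_S by blast
      then show ?thesis using v1 unfolding unstable_at_def by auto
    next
      case False
      then have "v \<in> (if odd (Suc (Suc k)) then colsF lam else rowsF lam)"
        using rows_or_cols[of v] v1 by (auto split: if_splits)
      then have "\<not> unstable_at lam (Yseq lam ?S c (Suc k)) v" using e2 unfolding canon_S by blast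
      then show ?thesis using v1 Y1 unfolding unstable_at_def by auto
    qed
    have "Yseq lam ?S c k v + (if v \<in> ?T then degF lam v else 0) = c v + nb lam ?T v"
      using canon_inv[OF st] v1(1) by blast
    then have e: "Yseq lam ?S c k v = c v + nb lam ?T v" using v1 by simp
    have un: "?T \<union> ?W = {0..N}"
    proof (rule set_eqI)
      fix x show "x \<in> ?T \<union> ?W \<longleftrightarrow> x \<in> {0..N}" using Tsub z by (cases "x = 0") auto
    qed
    have "nb lam (?T \<union> ?W) v = nb lam ?T v + nb lam ?W v" by (rule nb_un) auto
    then have "degF lam v = nb lam ?T v + nb lam ?W v" unfolding deg_nb by (simp only: un)
    then show "c v < nb lam ?W v" using lt e by linarith
  qed
  then have "?W = {}" using rec_no_fsc[OF c, of ?W] unfolding fsc_def by auto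
  show ?thesis
  proof (rule set_eqI)
    fix x show "x \<in> ?T \<longleftrightarrow> x \<in> {0..N}" using Tsub z \<open>?W = {}\<close> by (cases "x = 0") auto
  qed
qed

lemma full_burn:
  assumes c: "c \<in> Rec lam"
  shows "\<exists>K. Tset (CanonTop lam c) K = {0..N}"
proof (rule ccontr)
  let ?S = "CanonTop lam c"
  assume nf: "\<not> (\<exists>K. Tset ?S K = {0..N})"
  have st: "stable lam c" using rec_props[OF c] by auto
  have grow: "card (Tset ?S k) < card (Tset ?S (Suc (Suc k)))" for k
  proof -
    have ne: "?S (Suc k) \<noteq> {} \<or> ?S (Suc (Suc k)) \<noteq> {}" using two_empty[OF c] nf by blast
    have d1: "?S (Suc k) \<inter> Tset ?S k = {}" using canon_disj[OF st] .
    have d2: "?S (Suc (Suc k)) \<inter> Tset ?S (Suc k) = {}" using canon_disj[OF st] .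
    have eq: "Tset ?S (Suc (Suc k)) = Tset ?S k \<union> ?S (Suc k) \<union> ?S (Suc (Suc k))"
      unfolding Tset_Suc by auto
    have "Tset ?S k \<subset> Tset ?S (Suc (Suc k))"
      using ne d1 d2 unfolding eq Tset_Suc by blast
    moreover have "finite (Tset ?S (Suc (Suc k)))"
      using Tset_sub[OF canon_good] finite_subset by blast
    ultimately show ?thesis by (rule psubset_card_mono[rotated])
  qed
  have "m \<le> card (Tset ?S (2 * m))" for m
  proof (induction m)
    case 0 then show ?case by simp
  next
    case (Suc m)
    have "2 * Suc m = Suc (Suc (2 * m))" by simp
    then show ?case using grow[of "2 * m"] Suc by simp
  qed
  then have "N + 2 \<le> card (Tset ?S (2 * (N + 2)))" .
  moreover have "card (Tset ?S (2 * (N + 2))) \<le> card {0..N}"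
    using Tset_sub[OF canon_good] by (intro card_mono) auto
  ultimately show False by simp
qed

lemma topples:
  assumes c: "c \<in> Rec lam" and v: "v \<in> {1..N}"
  shows "\<exists>j. v \<in> CanonTop lam c (Suc j)"
proof -
  obtain K where K: "Tset (CanonTop lam c) K = {0..N}" using full_burn[OF c] by blast
  have "v \<in> Tset (CanonTop lam c) K" using v unfolding K by simp
  then obtain i where i: "v \<in> CanonTop lam c i" unfolding Tset_def by blast
  have "CanonTop lam c 0 = {0}" unfolding CanonTop_def by simp
  moreover have "v \<noteq> 0" using v by simp
  ultimately have "i \<noteq> 0" using i by (metis singletonD)
  then obtain j where "i = Suc j" using not0_implies_Suc by blast
  then show ?thesis using i by blast
qed

lemma kv_props:
  assumes c: "c \<in> Rec lam" and v: "v \<in> {1..N}"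
  shows "v \<in> CanonTop lam c (Suc (kv (CanonTop lam c) v))"
    and "\<And>j. v \<in> CanonTop lam c (Suc j) \<Longrightarrow> j = kv (CanonTop lam c) v"
proof -
  let ?S = "CanonTop lam c"
  have st: "stable lam c" using rec_props[OF c] by auto
  obtain j0 where "v \<in> ?S (Suc j0)" using topples[OF c v] by blast
  then show k1: "v \<in> ?S (Suc (kv ?S v))" unfolding kv_def by (rule LeastI)
  fix j assume j: "v \<in> ?S (Suc j)"
  have le: "kv ?S v \<le> j" unfolding kv_def using j by (rule Least_le)
  show "j = kv ?S v"
  proof (rule ccontr)
    assume "j \<noteq> kv ?S v"
    then have "Suc (kv ?S v) \<le> j" using le by auto
    then have "v \<in> Tset ?S j" using k1 Tset_mono by blast
    then show False using canon_disj[OF st, of j] j by blast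
  qed
qed

lemma fmin_le:
  assumes c: "c \<in> Rec lam" and v: "v \<in> {1..N}"
  shows "fmin lam (CanonTop lam c) v \<le> c v"
    and "fmin lam (CanonTop lam c) v < degF lam v"
proof -
  let ?S = "CanonTop lam c"
  let ?j = "kv ?S v"
  have st: "stable lam c" using rec_props[OF c] by auto
  have k1: "v \<in> ?S (Suc ?j)" using kv_props[OF c v] by blast
  have nT: "v \<notin> Tset ?S ?j" using canon_disj[OF st, of ?j] k1 by blast
  have d: "degF lam v \<le> Yseq lam ?S c ?j v" using canon_legal k1 by blast
  have "Yseq lam ?S c ?j v + (if v \<in> Tset ?S ?j then degF lam v else 0) = c v + nb lam (Tset ?S ?j) v"
    using canon_inv[OF st] v by blast
  then have e: "Yseq lam ?S c ?j v = c v + nb lam (Tset ?S ?j) v" using nT by simp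
  have f: "fmin lam ?S v = degF lam v - nb lam (Tset ?S ?j) v" unfolding fmin_def using v by simp
  have cs: "c v < degF lam v" using st v unfolding stable_def by blast
  show "fmin lam ?S v \<le> c v" using d e f by linarith
  show "fmin lam ?S v < degF lam v" using d e f cs by linarith
qed


lemma round:
  assumes c: "c \<in> Rec lam" and g: "is_config lam g"
    and ge: "\<forall>v\<in>{1..N}. fmin lam (CanonTop lam c) v \<le> g v"
  shows "(legal_step lam)\<^sup>*\<^sup>* (topple_set lam {0} g) g"
proof -
  let ?S = "CanonTop lam c"
  have st: "stable lam c" using rec_props[OF c] by auto
  have disj: "\<forall>j. ?S (Suc j) \<inter> Tset ?S j = {}" using canon_disj[OF st] by blast
  have leg: "\<forall>v\<in>?S (Suc j). degF lam v \<le> Yseq lam ?S g j v" for j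
  proof (induction j rule: less_induct)
    case (less j)
    have I: "\<forall>v\<in>{1..N}. Yseq lam ?S g j v + (if v \<in> Tset ?S j then degF lam v else 0) = g v + nb lam (Tset ?S j) v"
      by (rule inv[OF canon_good]) (use less disj in auto)
    show ?case
    proof
      fix v assume v: "v \<in> ?S (Suc j)"
      have v1: "v \<in> {1..N}" using v canon_good unfolding goodS_def by blast
      have jk: "j = kv ?S v" using kv_props(2)[OF c v1 v] .
      have nT: "v \<notin> Tset ?S j" using disj v by blast
      have e: "Yseq lam ?S g j v = g v + nb lam (Tset ?S j) v" using bspec[OF I v1] nT by simp
      have f: "fmin lam ?S v = degF lam v - nb lam (Tset ?S j) v" unfolding fmin_def jk using v1 by simp
      have "nb lam (Tset ?S j) v \<le> degF lam v" by (rule nb_le_deg)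
      then show "degF lam v \<le> Yseq lam ?S g j v" using e f bspec[OF ge v1] by linarith
    qed
  qed
  have chain: "(legal_step lam)\<^sup>*\<^sup>* (Yseq lam ?S g 0) (Yseq lam ?S g k)" for k
  proof (induction k)
    case 0 then show ?case by simp
  next
    case (Suc k)
    have sub: "?S (Suc k) \<subseteq> {1..N}" "indep (?S (Suc k))" using canon_good unfolding goodS_def by blast+
    have "(legal_step lam)\<^sup>*\<^sup>* (Yseq lam ?S g k) (topple_set lam (?S (Suc k)) (Yseq lam ?S g k))"
      by (rule legal_indep) (use sub leg Yseq_config finite_subset[OF sub(1)] in auto)
    then show ?case using Suc by simp
  qed
  obtain K where K: "Tset ?S K = {0..N}" using full_burn[OF c] by blast
  have I: "\<forall>v\<in>{1..N}. Yseq lam ?S g K v + (if v \<in> Tset ?S K then degF lam v else 0) = g v + nb lam (Tset ?S K) v"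
    by (rule inv[OF canon_good]) (use leg disj in auto)
  have "Yseq lam ?S g K = g"
  proof
    fix v show "Yseq lam ?S g K v = g v"
    proof (cases "v \<in> {1..N}")
      case True
      have "v \<in> Tset ?S K" using True K by auto
      then have "Yseq lam ?S g K v + degF lam v = g v + nb lam (Tset ?S K) v" using bspec[OF I True] by simp
      then show ?thesis unfolding K deg_nb by simp
    next
      case False
      then show ?thesis using Yseq_config[of "CanonTop lam c" g K] g False unfolding is_config_def by simp
    qed
  qed
  then show ?thesis using chain[of K] by simp
qed

lemma gpow: "(topple_set lam {0} ^^ m) f =
   (\<lambda>u. if u \<in> {1..N} then f u + m * (if adjF lam 0 u then 1 else 0) else 0)"
  if "is_config lam f"
proof (induction m)
  case 0 then show ?case using that unfolding is_config_def by auto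
next
  case (Suc m)
  show ?case
  proof
    fix u
    show "(topple_set lam {0} ^^ Suc m) f u = (if u \<in> {1..N} then f u + Suc m * (if adjF lam 0 u then 1 else 0) else 0)"
    proof (cases "u \<in> {1..N}")
      case True
      have "(u \<in> {0}) = False" using True by auto
      then show ?thesis using True unfolding funpow.simps comp_def Suc topple_nb nb_single by simp
    next
      case False
      then show ?thesis unfolding funpow.simps comp_def topple_nb by (simp only: if_not_P[OF False] if_False)
    qed
  qed
qed

lemma fmin_rec:
  assumes c: "c \<in> Rec lam"
  shows "fmin lam (CanonTop lam c) \<in> Rec lam"
proof -
  let ?S = "CanonTop lam c"
  let ?f = "fmin lam ?S"
  have fc: "is_config lam ?f" unfolding is_config_def fmin_def by auto
  have fs: "stable lam ?f" unfolding stable_def using fmin_le(2)[OF c] by blast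
  define K where "K = 2 * N + 2"
  let ?g = "(topple_set lam {0} ^^ K) ?f"
  have gp: "(legal_step lam)\<^sup>*\<^sup>* ((topple_set lam {0} ^^ m) ?f) ?f" for m
  proof (induction m)
    case 0 then show ?case by simp
  next
    case (Suc m)
    have cfg: "is_config lam ((topple_set lam {0} ^^ m) ?f)"
      unfolding gpow[OF fc] is_config_def by auto
    have ge: "\<forall>v\<in>{1..N}. ?f v \<le> (topple_set lam {0} ^^ m) ?f v"
      unfolding gpow[OF fc] by auto
    have "(legal_step lam)\<^sup>*\<^sup>* ((topple_set lam {0} ^^ Suc m) ?f) ((topple_set lam {0} ^^ m) ?f)"
      using round[OF c cfg ge] by simp
    then show ?case using Suc by simp
  qed
  define z where "z = (\<lambda>u. if u \<in> {1..N} then (if u \<in> rowsF lam then ?f u + degF lam u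
       else ?f u + K + 1 - degF lam u) else 0)"
  define R where "R = rowsF lam - {0}"
  have Rsub: "R \<subseteq> {1..N}" unfolding R_def using rows_lt by fastforce
  have Rind: "indep R" unfolding R_def indep_def using adj_rows by blast
  have zc: "is_config lam z" unfolding z_def is_config_def by auto
  have Rleg: "\<forall>v\<in>R. degF lam v \<le> z v" using Rsub unfolding z_def R_def by auto
  have nbR: "nb lam R u = degF lam u - 1" if u: "u \<in> colsF lam" for u
  proof -
    have eq: "{w \<in> R. adjF lam w u} = {w \<in> {0..N}. adjF lam w u} - {0}"
    proof (rule set_eqI)
      fix w
      show "w \<in> {w \<in> R. adjF lam w u} \<longleftrightarrow> w \<in> {w \<in> {0..N}. adjF lam w u} - {0}"
      proof
        assume "w \<in> {w \<in> R. adjF lam w u}"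
        then show "w \<in> {w \<in> {0..N}. adjF lam w u} - {0}" unfolding R_def using adj_le by auto
      next
        assume w: "w \<in> {w \<in> {0..N}. adjF lam w u} - {0}"
        then have "w \<notin> colsF lam" using adj_cols u by auto
        then have "w \<in> rowsF lam" using rows_or_cols w by auto
        then show "w \<in> {w \<in> R. adjF lam w u}" unfolding R_def using w by auto
      qed
    qed
    have "0 \<in> {w \<in> {0..N}. adjF lam w u}" using adj_0_col[OF u] by auto
    then show ?thesis unfolding nb_def eq deg_nb using nb_finite by (simp add: card_Diff_singleton)
  qed
  have zg: "topple_set lam R z = ?g"
  proof
    fix u
    show "topple_set lam R z u = ?g u"
    proof (cases "u \<in> {1..N}")
      case False
      then show ?thesis unfolding gpow[OF fc] topple_nb by (simp only: if_not_P[OF False] if_False)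
    next
      case True
      show ?thesis
      proof (cases "u \<in> rowsF lam")
        case row: True
        then have uR: "u \<in> R" using True unfolding R_def by auto
        have "nb lam R u = 0" using Rind uR unfolding indep_def by (intro nb_indep) auto
        moreover have "\<not> adjF lam 0 u" using adj_rows[OF zero_row row] .
        ultimately show ?thesis using True row uR unfolding gpow[OF fc] topple_nb z_def by simp
      next
        case col: False
        then have uc: "u \<in> colsF lam" using rows_or_cols True by auto
        then have uR: "u \<notin> R" unfolding R_def using rows_cols_disj by auto
        have d1: "1 \<le> degF lam u" using deg_pos True by blast
        have d2: "degF lam u \<le> N + 1" by (rule deg_le)
        have a0: "adjF lam 0 u" using adj_0_col[OF uc] .
        show ?thesis using True col uR nbR[OF uc] d1 d2 a0 unfolding gpow[OF fc] topple_nb z_def K_def by simp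
      qed
    qed
  qed
  have zleg: "(legal_step lam)\<^sup>*\<^sup>* z ?g"
    using legal_indep[OF finite_subset[OF Rsub finite_atLeastAtMost] Rsub Rind Rleg zc] unfolding zg .
  define a where "a = (\<lambda>u. z u - cmax lam u)"
  have ac: "is_config lam a" unfolding a_def is_config_def z_def cmax_def by auto
  have za: "(\<lambda>v. cmax lam v + a v) = z"
  proof
    fix u
    show "cmax lam u + a u = z u"
    proof (cases "u \<in> {1..N}")
      case False
      have "z u = 0" unfolding z_def by (simp only: if_not_P[OF False] if_False)
      moreover have "cmax lam u = 0" unfolding cmax_def by (simp only: if_not_P[OF False] if_False)
      ultimately show ?thesis unfolding a_def by simp
    next
      case True
      have d2: "degF lam u \<le> N + 1" by (rule deg_le)
      have "cmax lam u \<le> z u" using True d2 unfolding z_def cmax_def K_def by auto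
      then show ?thesis unfolding a_def by simp
    qed
  qed
  have "(legal_step lam)\<^sup>*\<^sup>* (\<lambda>v. cmax lam v + a v) ?f"
    unfolding za using zleg gp[of K] by simp
  then show ?thesis unfolding Rec_def using fc fs ac by blast
qed

lemma c_eq_fmin:
  assumes c: "c \<in> Rec_min lam"
  shows "c = fmin lam (CanonTop lam c)"
proof -
  let ?f = "fmin lam (CanonTop lam c)"
  have cR: "c \<in> Rec lam" using c unfolding Rec_min_def by auto
  have fR: "?f \<in> Rec lam" by (rule fmin_rec[OF cR])
  have le1: "sum c {1..N} \<le> sum ?f {1..N}" using c fR unfolding Rec_min_def by auto
  have pw: "\<And>i. i \<in> {1..N} \<Longrightarrow> ?f i \<le> c i" using fmin_le(1)[OF cR] by blast
  have le2: "sum ?f {1..N} \<le> sum c {1..N}" using pw by (rule sum_mono)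
  have eqs: "sum ?f {1..N} = sum c {1..N}" using le1 le2 by simp
  have cc: "is_config lam c" using rec_props[OF cR] by auto
  show ?thesis
  proof
    fix v
    show "c v = ?f v"
    proof (cases "v \<in> {1..N}")
      case True
      show ?thesis using sum_mono_inv[OF eqs pw True] by simp
    next
      case False
      have "c v = 0" using cc False unfolding is_config_def by blast
      moreover have "?f v = 0" unfolding fmin_def by (simp only: if_not_P[OF False] if_False)
      ultimately show ?thesis by simp
    qed
  qed
qed

end

theorem theorem3p6:
  fixes lam :: "nat list" and c c' :: "nat \<Rightarrow> nat"
  assumes "ferrers lam"
    and "c \<in> Rec_min lam" and "c' \<in> Rec_min lam"
  shows "CanonTop lam c = CanonTop lam c' \<longleftrightarrow> c = c'"
proof
  interpret fer lam by (rule fer.intro) (rule assms(1))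
  assume h: "CanonTop lam c = CanonTop lam c'"
  have "c = fmin lam (CanonTop lam c)" by (rule c_eq_fmin[OF assms(2)])
  also have "\<dots> = fmin lam (CanonTop lam c')" unfolding h ..
  also have "\<dots> = c'" by (rule c_eq_fmin[OF assms(3), symmetric])
  finally show "c = c'" .
next
  assume "c = c'"
  then show "CanonTop lam c = CanonTop lam c'" by simp
qed

end
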